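(* Let $\boldsymbol{W}=\sum_{i=1}^d\lambda_i\boldsymbol{u}_i\boldsymbol{u}_i^\top$ be a positive definite density matrix ($\{\boldsymbol{u}_i\}$ orthonormal, $\lambda_i>0$, $\sum_i\lambda_i=1$) and $\boldsymbol{L}$ a fixed symmetric $d\times d$ matrix. Draw $I,J$ independently with $\Pr(I=i)=\Pr(J=i)=\lambda_i$. If $I=J$ set $\boldsymbol{w}=\boldsymbol{u}_I$; if $I\ne J$ draw a uniform sign $s\in\{-1,1\}$ and set $\boldsymbol{w}=(\boldsymbol{u}_I+s\boldsymbol{u}_J)/\sqrt2$. Let $\ell=\boldsymbol{w}^\top\boldsymbol{L}\boldsymbol{w}$ and \[ \widetilde{\boldsymbol{L}}=\begin{cases}\frac{\ell}{\lambda_I^2}\boldsymbol{u}_I\boldsymbol{u}_I^\top, & I=J,\\ \frac{s\ell}{2\lambda_I\lambda_J}(\boldsymbol{u}_I\boldsymbol{u}_J^\top+\boldsymbol{u}_J\boldsymbol{u}_I^\top), & I\ne J.\end{cases} \] Then $\|\boldsymbol{w}\|=1$, $\mathbb{E}[\boldsymbol{w}\boldsymbol{w}^\top]=\boldsymbol{W}$, and $\mathbb{E}[\widetilde{\boldsymbol{L}}]=\boldsymbol{L}$.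
   Context: A density matrix is a symmetric positive semidefinite matrix of trace $1$. *)

theory Defs
  imports "HOL-Analysis.Analysis" "HOL-Probability.Probability"
begin

text \<open>Dimension d is the cardinality of the finite index type 'n.
  Vectors are real^'n, matrices real^'n^'n.\<close>

definition outer :: "real^'n \<Rightarrow> real^'n \<Rightarrow> real^'n^'n" where
  "outer u v = (\<chi> i j. u $ i * v $ j)"

definition index_pmf :: "('n::finite \<Rightarrow> real) \<Rightarrow> 'n pmf" where
  "index_pmf lam = embed_pmf lam"

text \<open>Joint law of (I, J, s): I, J independent with law lam, s uniform on {-1,1},
  independent of I and J (s is ignored when I = J).\<close>
definition sample_pmf :: "('n::finite \<Rightarrow> real) \<Rightarrow> ('n \<times> 'n \<times> real) pmf" where
  "sample_pmf lam =
     bind_pmf (index_pmf lam) (\<lambda>I.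
     bind_pmf (index_pmf lam) (\<lambda>J.
     map_pmf (\<lambda>s. (I, J, s)) (pmf_of_set {-1, 1::real})))"

definition sample_w :: "('n \<Rightarrow> real^'n) \<Rightarrow> 'n \<times> 'n \<times> real \<Rightarrow> real^'n" where
  "sample_w u \<omega> = (case \<omega> of (I, J, s) \<Rightarrow>
     if I = J then u I else (1 / sqrt 2) *\<^sub>R (u I + s *\<^sub>R u J))"

definition sample_ell :: "('n \<Rightarrow> real^'n) \<Rightarrow> real^'n^'n \<Rightarrow> 'n \<times> 'n \<times> real \<Rightarrow> real" where
  "sample_ell u L \<omega> = sample_w u \<omega> \<bullet> (L *v sample_w u \<omega>)"

definition sample_Ltilde ::
  "('n \<Rightarrow> real) \<Rightarrow> ('n \<Rightarrow> real^'n) \<Rightarrow> real^'n^'n \<Rightarrow> 'n \<times> 'n \<times> real \<Rightarrow> real^'n^'n" where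
  "sample_Ltilde lam u L \<omega> = (case \<omega> of (I, J, s) \<Rightarrow>
     if I = J then (sample_ell u L \<omega> / (lam I)^2) *\<^sub>R outer (u I) (u I)
     else (s * sample_ell u L \<omega> / (2 * lam I * lam J)) *\<^sub>R (outer (u I) (u J) + outer (u J) (u I)))"

end

theory Submission imports Defs begin

lemma complete:
  fixes u :: "'n::finite \<Rightarrow> real^'n"
  assumes orthonormal: "\<And>i j. u i \<bullet> u j = (if i = j then 1 else 0)"
  shows "(\<Sum>i\<in>UNIV. u i $ a * u i $ b) = (if a = b then 1 else 0)"
proof -
  define U :: "real^'n^'n" where "U = (\<chi> p i. u i $ p)"
  have "transpose U ** U = mat 1"
    by (simp add: vec_eq_iff matrix_matrix_mult_def transpose_def U_def mat_def
          orthonormal[symmetric] inner_vec_def)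
  hence "U ** transpose U = mat 1" using matrix_left_right_inverse by blast
  hence "(U ** transpose U) $ a $ b = mat 1 $ a $ b" by simp
  thus ?thesis by (simp add: matrix_matrix_mult_def transpose_def U_def mat_def)
qed

lemma pmf_index: 
  assumes "\<And>i. lam i > 0" "(\<Sum>i\<in>UNIV. lam i) = 1"
  shows "pmf (index_pmf lam) i = lam (i::'n::finite)"
  unfolding index_pmf_def
  by (rule pmf_embed_pmf) (use assms in \<open>auto simp: nn_integral_count_space_finite less_imp_le\<close>)

lemma sum_if_mult: "(\<Sum>x\<in>(UNIV::'a::finite set). (if x = a then c else 0) * f x) = c * (f a::real)"
proof -
  have "(\<Sum>x\<in>(UNIV::'a::finite set). (if x = a then c else 0) * f x) = (\<Sum>x\<in>UNIV. (if x = a then c * f x else 0))"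
    by (rule sum.cong) auto
  also have "\<dots> = c * f a" by simp
  finally show ?thesis .
qed

lemma pmf_sample:
  assumes "\<And>i. lam i > 0" "(\<Sum>i\<in>UNIV. lam i) = 1"
  shows "pmf (sample_pmf lam) (I,J,s) = lam I * lam (J::'n::finite) * (if s \<in> {-1,1} then 1/2 else 0)"
proof -
  have m: "pmf (map_pmf (\<lambda>s. (I',J',s)) P) (I,J,s) = (if I'=I then (if J'=J then pmf P s else 0) else 0)" for I' J' and P :: "real pmf"
  proof (cases "I'=I \<and> J'=J")
    case True
    have "inj (\<lambda>s. (I',J',s))" by (auto simp: inj_def)
    then show ?thesis using True pmf_map_inj' by fastforce
  next
    case False
    then show ?thesis by (auto simp: pmf_eq_0_set_pmf)
  qed
  have inner: "(\<Sum>aa\<in>UNIV. (if a = I then if aa = J then c else 0 else 0) * lam aa) = (if a = I then c * lam J else 0)" for a c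
    by (cases "a = I") (simp_all add: sum_if_mult del: mult_if_delta)
  have outer: "(\<Sum>a\<in>UNIV. (if a = I then c * lam J else 0) * lam a) = c * lam J * lam I" for c
    using sum_if_mult[of I "c * lam J" lam] by simp
  show ?thesis
    unfolding sample_pmf_def pmf_bind
    apply (subst integral_measure_pmf_real[where A=UNIV], simp, simp)
    apply (subst integral_measure_pmf_real[where A=UNIV], simp, simp)
    apply (simp add: m pmf_index[OF assms] inner outer del: mult_if_delta)
    done
qed

lemma expect_sample:
  fixes f :: "'n::finite \<times> 'n \<times> real \<Rightarrow> 'b::{banach, second_countable_topology}"
  assumes "\<And>i. lam i > 0" "(\<Sum>i\<in>UNIV. lam i) = 1"
  shows "measure_pmf.expectation (sample_pmf lam) f =
    (\<Sum>I\<in>UNIV. \<Sum>J\<in>UNIV. (lam I * lam J / 2) *\<^sub>R (f (I,J,1) + f (I,J,-1)))"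
proof -
  have "measure_pmf.expectation (sample_pmf lam) f = (\<Sum>x\<in>UNIV \<times> UNIV \<times> {-1,1}. pmf (sample_pmf lam) x *\<^sub>R f x)"
  proof (rule integral_measure_pmf)
    fix a assume "a \<in> set_pmf (sample_pmf lam)"
    then have "pmf (sample_pmf lam) a \<noteq> 0" by (simp add: set_pmf_iff)
    then show "a \<in> UNIV \<times> UNIV \<times> {-1,1}"
      by (cases a) (auto simp: pmf_sample[OF assms] split: if_splits)
  qed simp
  also have "\<dots> = (\<Sum>I\<in>UNIV. \<Sum>J\<in>UNIV. \<Sum>s\<in>{-1,1}. pmf (sample_pmf lam) (I,J,s) *\<^sub>R f (I,J,s))"
    unfolding sum.cartesian_product by (simp add: split_beta)
  also have "\<dots> = (\<Sum>I\<in>UNIV. \<Sum>J\<in>UNIV. (lam I * lam J / 2) *\<^sub>R (f (I,J,1) + f (I,J,-1)))"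
    by (simp add: pmf_sample[OF assms] scaleR_add_right add.commute)
  finally show ?thesis .
qed

lemma delta1: "(\<Sum>x\<in>(UNIV::'a::finite set). (f x::real) * (if x = a then 1 else 0)) = f a"
proof -
  have "(\<Sum>x\<in>(UNIV::'a::finite set). (f x::real) * (if x = a then 1 else 0)) = (\<Sum>x\<in>UNIV. if x = a then f x else 0)"
    by (rule sum.cong) auto
  thus ?thesis by simp
qed

lemma dd: "(\<Sum>p\<in>(UNIV::'a::finite set). \<Sum>q\<in>(UNIV::'b::finite set). (M p q::real) * (if p = a then 1 else 0) * (if q = b then 1 else 0)) = M a b"
proof -
  have "(\<Sum>q\<in>(UNIV::'b::finite set). (M p q::real) * (if p = a then 1 else 0) * (if q = b then 1 else 0)) = M p b * (if p = a then 1 else 0)" for p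
    using delta1[of "\<lambda>q. M p q * (if p = a then 1 else 0)" b] by simp
  then show ?thesis using delta1[of "\<lambda>p. M p b" a] by simp
qed

lemma symsum:
  fixes A x :: "'n::finite \<Rightarrow> 'n \<Rightarrow> real"
  assumes "\<And>I J. A J I = A I J"
  shows "(\<Sum>I\<in>UNIV. \<Sum>J\<in>UNIV. A I J / 2 * (x I a * x J b + x J a * x I b)) = (\<Sum>I\<in>UNIV. \<Sum>J\<in>UNIV. A I J * x I a * x J b)"
proof -
  have e1: "(\<Sum>I\<in>UNIV. \<Sum>J\<in>UNIV. A I J / 2 * (x I a * x J b + x J a * x I b)) =
    (\<Sum>I\<in>UNIV. \<Sum>J\<in>UNIV. A I J * x I a * x J b / 2) + (\<Sum>I\<in>UNIV. \<Sum>J\<in>UNIV. A I J * x J a * x I b / 2)"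
    unfolding sum.distrib[symmetric] by (intro sum.cong refl) (simp add: field_simps)
  have e2: "(\<Sum>I\<in>UNIV. \<Sum>J\<in>UNIV. A I J * x J a * x I b / 2) = (\<Sum>J\<in>UNIV. \<Sum>I\<in>UNIV. A I J * x J a * x I b / 2)"
    by (rule sum.swap)
  have e3: "(\<Sum>J\<in>UNIV. \<Sum>I\<in>UNIV. A I J * x J a * x I b / 2) = (\<Sum>J\<in>UNIV. \<Sum>I\<in>UNIV. A J I * x J a * x I b / 2)"
    using assms by simp
  show ?thesis unfolding e1 e2 e3 sum.distrib[symmetric] by (intro sum.cong refl) simp
qed

lemma swap4:
  fixes F :: "'a::finite \<Rightarrow> 'a \<Rightarrow> 'a \<Rightarrow> 'a \<Rightarrow> real"
  shows "(\<Sum>I\<in>UNIV. \<Sum>J\<in>UNIV. \<Sum>p\<in>UNIV. \<Sum>q\<in>UNIV. F I J p q) = (\<Sum>p\<in>UNIV. \<Sum>q\<in>UNIV. \<Sum>I\<in>UNIV. \<Sum>J\<in>UNIV. F I J p q)"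
proof -
  have "(\<Sum>I\<in>UNIV. \<Sum>J\<in>UNIV. \<Sum>p\<in>UNIV. \<Sum>q\<in>UNIV. F I J p q) = (\<Sum>I\<in>UNIV. \<Sum>p\<in>UNIV. \<Sum>J\<in>UNIV. \<Sum>q\<in>UNIV. F I J p q)"
    by (rule sum.cong[OF refl], rule sum.swap)
  also have "\<dots> = (\<Sum>p\<in>UNIV. \<Sum>I\<in>UNIV. \<Sum>J\<in>UNIV. \<Sum>q\<in>UNIV. F I J p q)"
    by (rule sum.swap)
  also have "\<dots> = (\<Sum>p\<in>UNIV. \<Sum>I\<in>UNIV. \<Sum>q\<in>UNIV. \<Sum>J\<in>UNIV. F I J p q)"
    by (rule sum.cong[OF refl], rule sum.cong[OF refl], rule sum.swap)
  also have "\<dots> = (\<Sum>p\<in>UNIV. \<Sum>q\<in>UNIV. \<Sum>I\<in>UNIV. \<Sum>J\<in>UNIV. F I J p q)"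
    by (rule sum.cong[OF refl], rule sum.swap)
  finally show ?thesis .
qed

lemma recon:
  fixes x :: "'n::finite \<Rightarrow> 'n \<Rightarrow> real"
  assumes c: "\<And>a b. (\<Sum>i\<in>UNIV. x i a * x i b) = (if a = b then 1 else 0)"
  shows "(\<Sum>I\<in>UNIV. \<Sum>J\<in>UNIV. (\<Sum>p\<in>UNIV. \<Sum>q\<in>UNIV. x I p * M p q * x J q) * x I a * x J b) = M a b"
proof -
  have "(\<Sum>I\<in>UNIV. \<Sum>J\<in>UNIV. (\<Sum>p\<in>UNIV. \<Sum>q\<in>UNIV. x I p * M p q * x J q) * x I a * x J b)
     = (\<Sum>I\<in>UNIV. \<Sum>J\<in>UNIV. \<Sum>p\<in>UNIV. \<Sum>q\<in>UNIV. M p q * (x I p * x I a) * (x J q * x J b))"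
    unfolding sum_distrib_right by (intro sum.cong refl) (simp add: mult_ac)
  also have "\<dots> = (\<Sum>p\<in>UNIV. \<Sum>q\<in>UNIV. \<Sum>I\<in>UNIV. \<Sum>J\<in>UNIV. M p q * (x I p * x I a) * (x J q * x J b))"
    by (rule swap4)
  also have "\<dots> = (\<Sum>p\<in>UNIV. \<Sum>q\<in>UNIV. M p q * (\<Sum>I\<in>UNIV. x I p * x I a) * (\<Sum>J\<in>UNIV. x J q * x J b))"
    by (simp add: sum_distrib_left sum_distrib_right mult_ac)
  also have "\<dots> = M a b" by (simp add: c dd)
  finally show ?thesis .
qed

lemma avg:
  fixes lam x :: "'n::finite \<Rightarrow> real"
  assumes "(\<Sum>i\<in>UNIV. lam i) = 1"
  shows "(\<Sum>I\<in>UNIV. \<Sum>J\<in>UNIV. lam I * lam J / 2 * (x I + x J)) = (\<Sum>I\<in>UNIV. lam I * x I)"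
proof -
  have e1: "(\<Sum>I\<in>UNIV. \<Sum>J\<in>UNIV. lam I * lam J / 2 * (x I + x J)) =
     (\<Sum>I\<in>UNIV. \<Sum>J\<in>UNIV. lam I * x I * lam J / 2) + (\<Sum>I\<in>UNIV. \<Sum>J\<in>UNIV. lam J * x J * lam I / 2)"
    unfolding sum.distrib[symmetric] by (intro sum.cong refl) (simp add: field_simps)
  have e2: "(\<Sum>I\<in>UNIV. \<Sum>J\<in>UNIV. lam J * x J * lam I / 2) = (\<Sum>J\<in>UNIV. \<Sum>I\<in>UNIV. lam J * x J * lam I / 2)"
    by (rule sum.swap)
  have e3: "(\<Sum>J\<in>UNIV. \<Sum>I\<in>UNIV. lam J * x J * lam I / 2) = (\<Sum>J\<in>UNIV. lam J * x J / 2)"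
    by (simp add: sum_distrib_left[symmetric] sum_divide_distrib[symmetric] assms)
  have e4: "(\<Sum>I\<in>UNIV. \<Sum>J\<in>UNIV. lam I * x I * lam J / 2) = (\<Sum>J\<in>UNIV. lam J * x J / 2)"
    by (simp add: sum_distrib_left[symmetric] sum_divide_distrib[symmetric] assms)
  show ?thesis unfolding e1 e2 e3 e4 by (simp add: sum.distrib[symmetric] sum_divide_distrib[symmetric])
qed


theorem lemma2:
  fixes lam :: "'n::finite \<Rightarrow> real"
    and u :: "'n \<Rightarrow> real^'n"
    and W L :: "real^'n^'n"
  assumes orthonormal: "\<And>i j. u i \<bullet> u j = (if i = j then 1 else 0)"
    and lam_pos: "\<And>i. lam i > 0"
    and lam_sum: "(\<Sum>i\<in>UNIV. lam i) = 1"
    and W_def: "W = (\<Sum>i\<in>UNIV. lam i *\<^sub>R outer (u i) (u i))"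
    and L_sym: "transpose L = L"
  shows "(\<forall>\<omega>\<in>set_pmf (sample_pmf lam). norm (sample_w u \<omega>) = 1)
       \<and> measure_pmf.expectation (sample_pmf lam) (\<lambda>\<omega>. outer (sample_w u \<omega>) (sample_w u \<omega>)) = W
       \<and> measure_pmf.expectation (sample_pmf lam) (sample_Ltilde lam u L) = L"
proof (intro conjI)
  have r2: "(1 / sqrt 2) * (1 / sqrt 2) = (1/2::real)" by (simp add: real_sqrt_mult[symmetric])
  show "\<forall>\<omega>\<in>set_pmf (sample_pmf lam). norm (sample_w u \<omega>) = 1"
  proof
    fix \<omega> assume "\<omega> \<in> set_pmf (sample_pmf lam)"
    then have "pmf (sample_pmf lam) \<omega> \<noteq> 0" by (simp add: set_pmf_iff)
    moreover obtain I J s where om: "\<omega> = (I,J,s)" by (cases \<omega>) auto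
    ultimately have s: "s = 1 \<or> s = -1" by (auto simp: pmf_sample[OF lam_pos lam_sum] split: if_splits)
    have "sample_w u \<omega> \<bullet> sample_w u \<omega> = 1"
    proof (cases "I = J")
      case True thus ?thesis by (simp add: om sample_w_def orthonormal)
    next
      case False
      have "sample_w u \<omega> \<bullet> sample_w u \<omega> = (1 / sqrt 2) * (1 / sqrt 2) * (1 + s * s)"
        using False by (simp add: om sample_w_def inner_add_left inner_add_right orthonormal algebra_simps)
      thus ?thesis using s r2 by auto
    qed
    thus "norm (sample_w u \<omega>) = 1" by (simp add: norm_eq_1)
  qed
  have P2: "(lam I * lam J / 2) *\<^sub>R (outer (sample_w u (I,J,1)) (sample_w u (I,J,1)) + outer (sample_w u (I,J,-1)) (sample_w u (I,J,-1)))
     = (lam I * lam J / 2) *\<^sub>R (outer (u I) (u I) + outer (u J) (u J))" for I J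
  proof (cases "I = J")
    case True thus ?thesis by (simp add: sample_w_def)
  next
    case False
    have "outer (sample_w u (I,J,1)) (sample_w u (I,J,1)) + outer (sample_w u (I,J,-1)) (sample_w u (I,J,-1))
      = outer (u I) (u I) + outer (u J) (u J)"
      using False unfolding vec_eq_iff
      by (simp add: sample_w_def outer_def algebra_simps r2[unfolded mult.assoc])
    thus ?thesis by simp
  qed
  show "measure_pmf.expectation (sample_pmf lam) (\<lambda>\<omega>. outer (sample_w u \<omega>) (sample_w u \<omega>)) = W"
    unfolding expect_sample[OF lam_pos lam_sum] P2 W_def
    unfolding vec_eq_iff
    by (simp add: sum_component outer_def avg[OF lam_sum, of "\<lambda>I. u I $ _ * u I $ _", simplified] scaleR_add_right[symmetric] del: scaleR_add_right)
  define a where "a I J = u I \<bullet> (L *v u J)" for I J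
  have asym: "a J I = a I J" for I J
  proof -
    have "a J I = (u J v* L) \<bullet> u I" by (simp add: a_def dot_lmul_matrix)
    also have "u J v* L = L *v u J" by (metis L_sym vector_transpose_matrix)
    finally show ?thesis by (simp add: a_def inner_commute)
  qed
  have ell: "sample_ell u L (I,J,s) = (1/2)*(a I I + s * (a I J + a J I) + (s * s) * a J J)" if "I \<noteq> J" for I J s
    using that unfolding sample_ell_def sample_w_def a_def
    by (simp add: algebra_simps inner_add_left inner_add_right r2[unfolded mult.assoc])
  have P3: "(lam I * lam J / 2) *\<^sub>R (sample_Ltilde lam u L (I,J,1) + sample_Ltilde lam u L (I,J,-1))
     = (a I J / 2) *\<^sub>R (outer (u I) (u J) + outer (u J) (u I))" for I J
  proof (cases "I = J")
    case True
    have l: "lam I \<noteq> 0" using lam_pos[of I] by simp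
    have h: "(x/2) *\<^sub>R (M + M) = x *\<^sub>R M" for x and M :: "real^'n^'n"
      by (metis scaleR_add_right scaleR_add_left[symmetric] field_sum_of_halves)
    show ?thesis using l unfolding True sample_Ltilde_def h
      by (simp add: sample_ell_def sample_w_def a_def power2_eq_square scaleR_add_left[symmetric] del: scaleR_add_left)
  next
    case False
    have l: "lam I \<noteq> 0" "lam J \<noteq> 0" using lam_pos[of I] lam_pos[of J] by simp_all
    have "(lam I * lam J / 2) * (1 * sample_ell u L (I,J,1) / (2 * lam I * lam J)) + (lam I * lam J / 2) * ((-1) * sample_ell u L (I,J,-1) / (2 * lam I * lam J)) = a I J / 2"
      using l by (simp add: ell[OF False] asym field_simps)
    moreover have "sample_Ltilde lam u L (I,J,1) + sample_Ltilde lam u L (I,J,-1) =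
       (1 * sample_ell u L (I,J,1) / (2 * lam I * lam J) + (-1) * sample_ell u L (I,J,-1) / (2 * lam I * lam J)) *\<^sub>R (outer (u I) (u J) + outer (u J) (u I))"
      using False unfolding sample_Ltilde_def by (simp only: scaleR_add_left prod.case if_False)
    ultimately show ?thesis by (simp only: scaleR_scaleR distrib_left)
  qed
  have aexp: "a I J = (\<Sum>p\<in>UNIV. \<Sum>q\<in>UNIV. u I $ p * L $ p $ q * u J $ q)" for I J
    by (simp add: a_def inner_vec_def matrix_vector_mult_def sum_distrib_left mult_ac)
  show "measure_pmf.expectation (sample_pmf lam) (sample_Ltilde lam u L) = L"
    unfolding expect_sample[OF lam_pos lam_sum] P3
    unfolding vec_eq_iff
  proof (intro allI)
    fix i j
    have "(\<Sum>I\<in>UNIV. \<Sum>J\<in>UNIV. a I J / 2 * ((u I $ i) * (u J $ j) + (u J $ i) * (u I $ j))) = L $ i $ j"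
      using symsum[of a "\<lambda>I p. u I $ p" i j, OF asym] unfolding aexp
      using recon[of "\<lambda>I p. u I $ p" "\<lambda>p q. L $ p $ q" i j, OF complete[OF orthonormal]] by simp
    then show "(\<Sum>I\<in>UNIV. \<Sum>J\<in>UNIV. (a I J / 2) *\<^sub>R (outer (u I) (u J) + outer (u J) (u I))) $ i $ j = L $ i $ j"
      by (simp add: sum_component outer_def)
  qed
qed
end
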